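(* Let $d\ge3$, $h\ge1$. The group $G(d,h)$ contains a subgroup isomorphic to $(\mathbb{Z}/d\mathbb{Z})^{(d-1)^h}$.
   Context: Let $\mathcal{T}(d,h)$ be the rooted tree in which the root $0$ has $d$ children, every vertex at distance $1,\dots,h-1$ from the root has $d-1$ children, and the vertices at distance $h$ are leaves. Let $V$ be its vertex set, $A$ its adjacency matrix, $\Delta := dI-A$, and $\Lambda\subset\mathbb{Z}^V$ the lattice spanned by the rows of $\Delta$. Then $G(d,h):=\mathbb{Z}^V/\Lambda$. *)

theory Defs
  imports "HOL-Algebra.Algebra"
begin

text \<open>Vertices of the tree T(d,h), encoded as paths from the root: the root is [],
  the root has children [i] for i < d, and every vertex at depth 1..h-1 has
  children v @ [j] for j < d - 1.  Leaves are at depth h.\<close>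
definition tree_vertices :: "nat \<Rightarrow> nat \<Rightarrow> nat list set" where
  "tree_vertices d h = {xs. length xs \<le> h \<and> (xs \<noteq> [] \<longrightarrow> hd xs < d) \<and>
                             (\<forall>i \<in> set (tl xs). i < d - 1)}"

definition tree_adj :: "nat list \<Rightarrow> nat list \<Rightarrow> bool" where
  "tree_adj u v \<longleftrightarrow> (\<exists>x. v = u @ [x]) \<or> (\<exists>x. u = v @ [x])"

definition tree_A :: "nat list \<Rightarrow> nat list \<Rightarrow> int" where
  "tree_A u v = (if tree_adj u v then 1 else 0)"

definition tree_Delta :: "nat \<Rightarrow> nat list \<Rightarrow> nat list \<Rightarrow> int" where
  "tree_Delta d u v = (if u = v then int d else 0) - tree_A u v"

text \<open>The free abelian group Z^V (written multiplicatively as an HOL-Algebra monoid).\<close>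
definition ZV :: "nat \<Rightarrow> nat \<Rightarrow> (nat list \<Rightarrow> int) monoid" where
  "ZV d h = product_group (tree_vertices d h) (\<lambda>_. integer_group)"

definition tree_Lambda :: "nat \<Rightarrow> nat \<Rightarrow> (nat list \<Rightarrow> int) set" where
  "tree_Lambda d h = {f. \<exists>c :: nat list \<Rightarrow> int.
      f = (\<lambda>x \<in> tree_vertices d h. \<Sum>u \<in> tree_vertices d h. c u * tree_Delta d u x)}"

definition Gdh :: "nat \<Rightarrow> nat \<Rightarrow> (nat list \<Rightarrow> int) set monoid" where
  "Gdh d h = ZV d h Mod tree_Lambda d h"

end

theory Submission
  imports Defs
begin



definition bnd :: "nat \<Rightarrow> nat list \<Rightarrow> nat" where
  "bnd d x = (if x = [] then d else d - 1)"

lemma V_snoc: "x @ [i] \<in> tree_vertices d h \<longleftrightarrow>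
   x \<in> tree_vertices d h \<and> length x < h \<and> i < bnd d x"
  by (cases x) (auto simp: tree_vertices_def bnd_def)

lemma V_Nil: "[] \<in> tree_vertices d h"
  by (simp add: tree_vertices_def)

lemma V_butlast: "x \<in> tree_vertices d h \<Longrightarrow> butlast x \<in> tree_vertices d h"
proof (cases x rule: rev_cases)
  case (snoc ys y)
  assume "x \<in> tree_vertices d h" then show ?thesis using snoc V_snoc by auto
qed (simp add: V_Nil)

lemma V_prefix: "x @ y \<in> tree_vertices d h \<Longrightarrow> x \<in> tree_vertices d h"
proof (induction y rule: rev_induct)
  case (snoc a y) then show ?case using V_snoc[of "x @ y"] by simp
qed simp

lemma V_len: "x \<in> tree_vertices d h \<Longrightarrow> length x \<le> h"
  by (simp add: tree_vertices_def)

lemma finite_V: "finite (tree_vertices d h)"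
proof -
  have "tree_vertices d h \<subseteq> {xs. set xs \<subseteq> {..<d} \<and> length xs \<le> h}"
  proof
    fix xs assume a: "xs \<in> tree_vertices d h"
    show "xs \<in> {xs. set xs \<subseteq> {..<d} \<and> length xs \<le> h}"
    proof (cases xs)
      case (Cons y ys) then show ?thesis using a by (auto simp: tree_vertices_def)
    qed (use a in \<open>auto simp: tree_vertices_def\<close>)
  qed
  then show ?thesis by (rule finite_subset) (simp add: finite_lists_length_le)
qed

definition DS :: "nat \<Rightarrow> nat \<Rightarrow> (nat list \<Rightarrow> int) \<Rightarrow> nat list \<Rightarrow> int" where
  "DS d h c x = (\<Sum>u \<in> tree_vertices d h. c u * tree_Delta d u x)"

definition NS :: "nat \<Rightarrow> nat \<Rightarrow> (nat list \<Rightarrow> int) \<Rightarrow> nat list \<Rightarrow> int" where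
  "NS d h c x = (if x = [] then 0 else c (butlast x)) +
      (if length x < h then (\<Sum>i<bnd d x. c (x @ [i])) else 0)"

lemma adj_set:
  assumes x: "x \<in> tree_vertices d h"
  shows "{u \<in> tree_vertices d h. tree_adj u x} =
    (if x = [] then {} else {butlast x}) \<union> (if length x < h then (\<lambda>i. x @ [i]) ` {..<bnd d x} else {})"
  (is "?L = ?R")
proof
  show "?L \<subseteq> ?R"
  proof
    fix u assume "u \<in> ?L"
    then have u: "u \<in> tree_vertices d h" "tree_adj u x" by auto
    then consider i where "x = u @ [i]" | i where "u = x @ [i]" unfolding tree_adj_def by blast
    then show "u \<in> ?R"
    proof cases
      case 1 then show ?thesis by auto
    next
      case 2 then show ?thesis using u V_snoc[of x i d h] by auto
    qed
  qed
next
  show "?R \<subseteq> ?L"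
  proof
    fix u assume "u \<in> ?R"
    then consider "x \<noteq> []" "u = butlast x" | i where "length x < h" "i < bnd d x" "u = x @ [i]"
      by (auto split: if_splits dest!: arg_cong[where f=length])
    then show "u \<in> ?L"
    proof cases
      case 1
      then have "x = u @ [last x]" by simp
      then show ?thesis using 1 x V_butlast unfolding tree_adj_def by blast
    next
      case 2 then show ?thesis using x V_snoc[of x i d h] unfolding tree_adj_def by blast
    qed
  qed
qed

lemma DS_eq:
  assumes x: "x \<in> tree_vertices d h"
  shows "DS d h c x = int d * c x - NS d h c x"
proof -
  have "DS d h c x = (\<Sum>u \<in> tree_vertices d h. (if u = x then int d * c u else 0))
        - (\<Sum>u \<in> tree_vertices d h. (if tree_adj u x then c u else 0))"
  proof -
    have nadj: "\<not> tree_adj x x" by (auto simp: tree_adj_def)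
    have "c u * tree_Delta d u x = (if u = x then int d * c u else 0) - (if tree_adj u x then c u else 0)" for u
      using nadj by (auto simp: tree_Delta_def tree_A_def algebra_simps)
    then show ?thesis unfolding DS_def by (simp add: sum_subtractf)
  qed
  also have "(\<Sum>u \<in> tree_vertices d h. (if u = x then int d * c u else 0)) = int d * c x"
    using x finite_V by (simp add: sum.delta)
  also have "(\<Sum>u \<in> tree_vertices d h. (if tree_adj u x then c u else 0)) =
      (\<Sum>u \<in> {u \<in> tree_vertices d h. tree_adj u x}. c u)"
    using finite_V by (simp add: sum.inter_filter)
  also have "\<dots> = NS d h c x"
  proof -
    have inj: "inj_on (\<lambda>i. x @ [i]) A" for A by (auto simp: inj_on_def)
    have disj: "(if x = [] then {} else {butlast x}) \<inter> (if length x < h then (\<lambda>i. x @ [i]) ` {..<bnd d x} else {}) = {}"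
      by (auto split: if_splits dest!: arg_cong[where f=length])
    show ?thesis
      unfolding adj_set[OF x] NS_def
      apply (subst sum.union_disjoint)
      subgoal by simp
      subgoal by simp
      subgoal using disj by simp
      subgoal by (simp add: sum.reindex[OF inj])
      done
  qed
  finally show ?thesis .
qed




lemma DS_inj_le:
  assumes d: "d \<ge> 2" and hz: "\<forall>x\<in>tree_vertices d h. DS d h w x = 0"
  shows "\<forall>x\<in>tree_vertices d h. w x \<le> 0"
proof (rule ccontr)
  let ?V = "tree_vertices d h"
  assume "\<not> (\<forall>x\<in>?V. w x \<le> 0)"
  then obtain x0 where x0: "x0 \<in> ?V" "w x0 > 0" by auto
  define M where "M = Max (w ` ?V)"
  have Mge: "w y \<le> M" if "y \<in> ?V" for y
    unfolding M_def using that finite_V by (simp add: Max_ge)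
  have Mpos: "M > 0" using Mge[OF x0(1)] x0(2) by simp
  obtain xm where xm: "xm \<in> ?V" "w xm = M"
    unfolding M_def using Max_in[of "w ` ?V"] finite_V V_Nil by fastforce
  have bpos: "bnd d x \<ge> 1" for x using d by (auto simp: bnd_def)
  have key: "length x < h \<and> w (x @ [0]) = M" if x: "x \<in> ?V" "w x = M" for x
  proof -
    have eq: "int d * M = NS d h w x" using hz x DS_eq[OF x(1), of w] by simp
    define p where "p = (if x = [] then 0 else w (butlast x))"
    have p: "p \<le> (if x = [] then 0 else M)"
      unfolding p_def using Mge V_butlast[OF x(1)] by auto
    have lh: "length x < h"
    proof (rule ccontr)
      assume "\<not> length x < h"
      then have "NS d h w x = p" unfolding NS_def p_def by simp
      then have "int d * M \<le> M" using eq p Mpos by (auto split: if_splits)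
      moreover have "int d * M \<ge> 2 * M" using d Mpos by (simp add: mult_right_mono)
      ultimately show False using Mpos by simp
    qed
    have ns: "NS d h w x = p + (\<Sum>i<bnd d x. w (x @ [i]))"
      unfolding NS_def p_def using lh by simp
    have cnt: "(if x = [] then 0 else M) + (\<Sum>i<bnd d x. M) = int d * M"
      using d by (auto simp: bnd_def of_nat_diff algebra_simps)
    have "w (x @ [0]) = M"
    proof (rule ccontr)
      assume ne: "w (x @ [0]) \<noteq> M"
      have "(\<Sum>i<bnd d x. w (x @ [i])) < (\<Sum>i<bnd d x. M)"
      proof (rule sum_strict_mono_ex1)
        show "\<forall>i\<in>{..<bnd d x}. w (x @ [i]) \<le> M"
          using Mge V_snoc x(1) lh by auto
        show "\<exists>i\<in>{..<bnd d x}. w (x @ [i]) < M"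
          using ne Mge[of "x @ [0]"] V_snoc[of x 0 d h] x(1) lh bpos[of x]
          by (intro bexI[of _ 0]) auto
      qed simp
      then show False using eq ns p cnt by linarith
    qed
    then show ?thesis using lh by simp
  qed
  have "\<forall>x\<in>?V. h - length x = n \<longrightarrow> w x = M \<longrightarrow> False" for n
  proof (induction n)
    case 0 then show ?case using key by fastforce
  next
    case (Suc n)
    show ?case
    proof (intro ballI impI)
      fix x assume x: "x \<in> ?V" "h - length x = Suc n" "w x = M"
      from key[OF x(1) x(3)] have "length x < h" "w (x @ [0]) = M" by auto
      moreover have "x @ [0] \<in> ?V" using V_snoc[of x 0 d h] x(1) \<open>length x < h\<close> bpos[of x] by auto
      moreover have "h - length (x @ [0]) = n" using x(2) by simp
      ultimately show False using Suc.IH by blast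
    qed
  qed
  then show False using xm by blast
qed

lemma DS_neg: "DS d h (\<lambda>u. - w u) x = - DS d h w x"
  unfolding DS_def by (simp add: sum_negf)

lemma DS_inj:
  assumes d: "d \<ge> 2" and hz: "\<forall>x\<in>tree_vertices d h. DS d h w x = 0"
  shows "\<forall>x\<in>tree_vertices d h. w x = 0"
proof -
  have "\<forall>x\<in>tree_vertices d h. w x \<le> 0" using DS_inj_le[OF d hz] .
  moreover have "\<forall>x\<in>tree_vertices d h. - w x \<le> 0"
    using DS_inj_le[OF d, of h "\<lambda>u. - w u"] hz DS_neg by simp
  ultimately show ?thesis by (meson antisym neg_le_0_iff_le)
qed




fun pv :: "nat \<Rightarrow> nat list \<Rightarrow> int" where
  "pv e [] = 1"
| "pv e [i] = 0"
| "pv e (i # j # r) = (if j = e then - pv e r else 0)"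

lemma pv_odd: "odd (length r) \<Longrightarrow> pv e r = 0"
  by (induction e r rule: pv.induct) auto

lemma pv_snoc2: "even (length r) \<Longrightarrow> pv e (r @ [k, i]) = (if i = e then - pv e r else 0)"
  by (induction e r rule: pv.induct) auto

lemma pv_nz: "pv e r \<noteq> 0 \<Longrightarrow> r = [] \<or> (length r \<ge> 2 \<and> last r = e)"
  by (induction e r rule: pv.induct) (auto split: if_splits)

definition P :: "nat \<Rightarrow> nat list \<Rightarrow> nat list \<Rightarrow> int" where
  "P d v u = (if take (length v) u = v then pv (d - 2) (drop (length v) u) else 0)"

lemma P_ext: "P d v (v @ r) = pv (d - 2) r"
  by (simp add: P_def)

lemma P_notext_snoc:
  assumes "take (length v) x \<noteq> v"
  shows "P d v (x @ [i]) = (if v = x @ [i] then 1 else 0)"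
proof (cases "length v \<le> length x")
  case True
  then have "take (length v) (x @ [i]) = take (length v) x" by simp
  then show ?thesis using assms by (auto simp: P_def)
next
  case False
  then have "take (length v) (x @ [i]) = x @ [i]" by simp
  then show ?thesis by (auto simp: P_def)
qed

lemma P_notext_butlast:
  assumes "take (length v) x \<noteq> v"
  shows "P d v (butlast x) = 0"
proof -
  have "take (length v) (butlast x) \<noteq> v"
  proof
    assume a: "take (length v) (butlast x) = v"
    have "length v \<le> length (butlast x)"
      using arg_cong[OF a, of length] by simp
    then have "take (length v) x = take (length v) (butlast x)"
    proof (cases "x = []")
      case True then show ?thesis using a by simp
    next
      case False then show ?thesis
      proof -
        have "length x > 0" using False by simp
        then have "length v < length x" using \<open>length v \<le> length (butlast x)\<close> length_butlast[of x] by linarith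
        then show ?thesis by (simp add: take_butlast)
      qed
    qed
    then show False using a assms by simp
  qed
  then show ?thesis by (simp add: P_def)
qed

lemma sum_delta_lt: "(j::nat) < n \<Longrightarrow> (\<Sum>i<n. if i = j then c else 0) = (c::int)"
  by (simp add: sum.delta)

lemma NS_P:
  assumes d: "d \<ge> 3" and v: "v \<in> tree_vertices d h" and ev: "even (h - length v)"
    and x: "x \<in> tree_vertices d h"
  shows "NS d h (P d v) x = (if v \<noteq> [] \<and> x = butlast v then 1 else 0)"
proof (cases "take (length v) x = v")
  case True
  define r where "r = drop (length v) x"
  have xr: "x = v @ r" using append_take_drop_id[of "length v" x] True unfolding r_def by simp
  have lx: "length x \<le> h" using V_len[OF x] .
  have rhs: "\<not> (v \<noteq> [] \<and> x = butlast v)"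
  proof
    assume "v \<noteq> [] \<and> x = butlast v"
    then have "length x < length v" by simp
    then show False using xr by simp
  qed
  show ?thesis
  proof (cases "even (length r)")
    case True
    have par: "(if x = [] then 0 else P d v (butlast x)) = 0"
    proof (cases "r = []")
      case True
      show ?thesis
      proof (cases "x = []")
        case False
        then have "length (butlast x) < length x" by simp
        have xv: "x = v" using xr True by simp
        have "take (length v) (butlast x) = butlast x" using xv by simp
        moreover have "butlast x \<noteq> v"
        proof
          assume "butlast x = v"
          then have "length (butlast x) = length x" using xv by simp
          then show False using \<open>length (butlast x) < length x\<close> by simp
        qed
        ultimately have "take (length v) (butlast x) \<noteq> v" by simp
        then show ?thesis by (simp add: P_def)
      qed simp
    next
      case False
      then have "butlast x = v @ butlast r" using xr by (simp add: butlast_append)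
      then show ?thesis using \<open>even (length r)\<close> False
        by (simp add: P_ext pv_odd)
    qed
    have ch: "P d v (x @ [i]) = 0" for i
    proof -
      have "x @ [i] = v @ (r @ [i])" using xr by simp
      then show ?thesis using \<open>even (length r)\<close> by (simp only: P_ext) (simp add: pv_odd)
    qed
    have r0: "(if v \<noteq> [] \<and> x = butlast v then 1 else 0) = (0::int)" using rhs by simp
    show ?thesis unfolding NS_def r0 using par ch by simp
  next
    case False
    then have "r \<noteq> []" by auto
    then obtain r' k where rk: "r = r' @ [k]" by (cases r rule: rev_cases) auto
    have er': "even (length r')" using False rk by simp
    have xne: "x \<noteq> []" using xr rk by simp
    have "butlast x = v @ r'" using xr rk by (simp add: butlast_append)
    then have par: "P d v (butlast x) = pv (d - 2) r'"
      by (simp only: P_ext)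
    have lxh: "length x < h"
    proof (rule ccontr)
      assume "\<not> length x < h"
      then have "length x = h" using lx by simp
      then have "h - length v = length r" using xr by simp
      then show False using ev False by simp
    qed
    have ch: "P d v (x @ [i]) = (if i = d - 2 then - pv (d - 2) r' else 0)" for i
    proof -
      have "x @ [i] = v @ (r' @ [k, i])" using xr rk by simp
      then show ?thesis using er' by (simp only: P_ext) (simp add: pv_snoc2)
    qed
    have "(\<Sum>i<bnd d x. P d v (x @ [i])) = - pv (d - 2) r'"
      using xne d by (simp add: ch bnd_def sum_delta_lt)
    moreover have r0: "(if v \<noteq> [] \<and> x = butlast v then 1 else 0) = (0::int)" using rhs by simp
    ultimately show ?thesis unfolding NS_def r0 using xne par lxh by simp
  qed
next
  case False
  have par: "(if x = [] then 0 else P d v (butlast x)) = 0"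
    using P_notext_butlast[OF False] by simp
  have ch: "(if length x < h then (\<Sum>i<bnd d x. P d v (x @ [i])) else 0) =
      (if v \<noteq> [] \<and> x = butlast v then 1 else 0)"
  proof (cases "v \<noteq> [] \<and> x = butlast v")
    case True
    then have vx: "x @ [last v] = v" by simp
    then have "length x < h" "last v < bnd d x" using V_snoc[of x "last v" d h] v by auto
    moreover have "(\<Sum>i<bnd d x. P d v (x @ [i])) = (\<Sum>i<bnd d x. if i = last v then 1 else 0)"
    proof (intro sum.cong refl)
      fix i show "P d v (x @ [i]) = (if i = last v then 1 else 0)"
        unfolding P_notext_snoc[OF False] using vx by auto
    qed
    ultimately show ?thesis using True sum_delta_lt by simp
  next
    case f2: False
    have "P d v (x @ [i]) = 0" for i
      using f2 by (auto simp: P_notext_snoc[OF False])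
    moreover have r0: "(if v \<noteq> [] \<and> x = butlast v then 1 else 0) = (0::int)" using f2 by simp
    ultimately show ?thesis unfolding r0 by simp
  qed
  show ?thesis using par ch unfolding NS_def by simp
qed




definition sib :: "nat \<Rightarrow> nat list \<Rightarrow> nat list" where
  "sib d v = butlast v @ [bnd d (butlast v) - 1]"

definition zv :: "nat \<Rightarrow> nat list \<Rightarrow> nat list \<Rightarrow> int" where
  "zv d v = (if v = [] then P d [] else (\<lambda>u. P d v u - P d (sib d v) u))"

definition free :: "nat \<Rightarrow> nat \<Rightarrow> nat list \<Rightarrow> bool" where
  "free d h v \<longleftrightarrow> v \<in> tree_vertices d h \<and> even (h - length v) \<and>
     (v = [] \<or> Suc (last v) < bnd d (butlast v))"

lemma NS_diff: "NS d h (\<lambda>u. f u - g u) x = NS d h f x - NS d h g x"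
  unfolding NS_def by (simp add: sum_subtractf)

lemma bnd_pos: "d \<ge> 2 \<Longrightarrow> bnd d x \<ge> 1"
  by (auto simp: bnd_def)

lemma sib_V:
  assumes d: "d \<ge> 3" and v: "v \<in> tree_vertices d h" and ne: "v \<noteq> []"
  shows "sib d v \<in> tree_vertices d h"
proof -
  have "butlast v @ [last v] \<in> tree_vertices d h" using v ne by simp
  then have "butlast v \<in> tree_vertices d h" "length (butlast v) < h"
    using V_snoc by blast+
  moreover have "bnd d (butlast v) - 1 < bnd d (butlast v)" using bnd_pos[of d] d by (simp add: Suc_le_eq)
  ultimately show ?thesis unfolding sib_def using V_snoc by blast
qed

lemma sib_simps [simp]: "butlast (sib d v) = butlast v" "sib d v \<noteq> []"
   "last (sib d v) = bnd d (butlast v) - 1"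
  by (auto simp: sib_def)

lemma length_sib: "v \<noteq> [] \<Longrightarrow> length (sib d v) = length v"
  by (simp add: sib_def)

lemma NS_z:
  assumes d: "d \<ge> 3" and f: "free d h v" and x: "x \<in> tree_vertices d h"
  shows "NS d h (zv d v) x = 0"
proof (cases "v = []")
  case True
  then show ?thesis using NS_P[OF d _ _ x, of "[]"] f V_Nil by (simp add: zv_def free_def)
next
  case False
  have v: "v \<in> tree_vertices d h" "even (h - length v)" using f by (auto simp: free_def)
  have s: "sib d v \<in> tree_vertices d h" "even (h - length (sib d v))"
    using sib_V[OF d v(1) False] v(2) length_sib[OF False] by auto
  show ?thesis using False NS_P[OF d v x] NS_P[OF d s x]
    by (simp add: zv_def NS_diff)
qed

lemma DS_z:
  assumes d: "d \<ge> 3" and f: "free d h v" and x: "x \<in> tree_vertices d h"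
  shows "DS d h (zv d v) x = int d * zv d v x"
  using DS_eq[OF x] NS_z[OF d f x] by simp

lemma P_self: "P d w w = 1"
  by (simp add: P_def)

lemma P_free:
  assumes d: "d \<ge> 2" and f: "free d h v" and nz: "P d w v \<noteq> 0"
  shows "v = w"
proof -
  have t: "take (length w) v = w" and pz: "pv (d - 2) (drop (length w) v) \<noteq> 0"
    using nz by (auto simp: P_def split: if_splits)
  define r where "r = drop (length w) v"
  have vr: "v = w @ r" unfolding r_def using append_take_drop_id[of "length w" v] t by simp
  from pv_nz[OF pz[folded r_def]] show ?thesis
  proof
    assume "r = []" then show ?thesis using vr by simp
  next
    assume r: "2 \<le> length r \<and> last r = d - 2"
    then have "r \<noteq> []" by auto
    then have lv: "last v = d - 2" using vr r by (simp add: last_append)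
    have "length (butlast v) \<ge> 1" using vr r by (simp del: length_greater_0_conv) linarith
    then have "butlast v \<noteq> []" by (metis le_zero_eq list.size(3) not_one_le_zero)
    then have "bnd d (butlast v) = d - 1" by (simp add: bnd_def)
    moreover have "v \<noteq> []" using vr r by auto
    ultimately have "\<not> free d h v" using lv d by (auto simp: free_def)
    then show ?thesis using f by simp
  qed
qed

lemma P_eq:
  assumes d: "d \<ge> 2" and f: "free d h v"
  shows "P d w v = (if v = w then 1 else 0)"
  using P_free[OF d f, of w] P_self by auto

lemma z_priv:
  assumes d: "d \<ge> 3" and f: "free d h v" and f': "free d h v'"
  shows "zv d v' v = (if v = v' then 1 else 0)"
proof (cases "v' = []")
  case True
  then show ?thesis using P_eq[of d h v "[]"] d f by (simp add: zv_def)
next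
  case False
  have "v \<noteq> sib d v'"
  proof
    assume "v = sib d v'"
    then have "free d h (sib d v')" using f by simp
    moreover have "bnd d (butlast v') \<ge> 1" using bnd_pos d by simp
    ultimately show False by (simp add: free_def)
  qed
  then show ?thesis using False P_eq[of d h v v'] P_eq[of d h v "sib d v'"] d f
    by (simp add: zv_def)
qed




definition okv :: "nat \<Rightarrow> nat list \<Rightarrow> bool" where
  "okv d v \<longleftrightarrow> (v \<noteq> [] \<longrightarrow> hd v < d) \<and> (\<forall>i\<in>set (tl v). i < d - 1)"

definition fcv :: "nat \<Rightarrow> nat list \<Rightarrow> bool" where
  "fcv d v \<longleftrightarrow> v = [] \<or> Suc (last v) < bnd d (butlast v)"

definition Lv :: "nat \<Rightarrow> nat \<Rightarrow> nat list set" where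
  "Lv d t = {v. length v = t \<and> okv d v \<and> fcv d v}"

lemma free_alt: "free d h v \<longleftrightarrow> length v \<le> h \<and> even (h - length v) \<and> okv d v \<and> fcv d v"
  by (auto simp: free_def tree_vertices_def okv_def fcv_def)

lemma finite_Lv: "finite (Lv d t)"
proof (rule finite_subset[OF _ finite_V[of d t]])
  show "Lv d t \<subseteq> tree_vertices d t" by (auto simp: Lv_def okv_def tree_vertices_def)
qed

lemma Lv0: "Lv d 0 = {[]}" by (auto simp: Lv_def okv_def fcv_def)

lemma Lv1: "Lv d 1 = (\<lambda>i. [i]) ` {..<d - 1}"
proof
  show "Lv d 1 \<subseteq> (\<lambda>i. [i]) ` {..<d - 1}"
  proof
    fix v assume "v \<in> Lv d 1"
    then obtain i where "v = [i]" "Suc i < d" by (auto simp: Lv_def fcv_def bnd_def length_Suc_conv)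
    then show "v \<in> (\<lambda>i. [i]) ` {..<d - 1}" by auto
  qed
qed (auto simp: Lv_def okv_def fcv_def bnd_def)

lemma card_Lv1: "card (Lv d 1) = d - 1"
  unfolding Lv1 by (subst card_image) (auto simp: inj_on_def)

lemma Lv2: "Lv d (Suc (Suc t)) = (\<lambda>(a, m, b). a # m @ [b]) `
     ({..<d} \<times> {m. set m \<subseteq> {..<d - 1} \<and> length m = t} \<times> {..<d - 2})"
proof
  show "Lv d (Suc (Suc t)) \<subseteq> (\<lambda>(a, m, b). a # m @ [b]) `
     ({..<d} \<times> {m. set m \<subseteq> {..<d - 1} \<and> length m = t} \<times> {..<d - 2})"
  proof
    fix v assume v: "v \<in> Lv d (Suc (Suc t))"
    then obtain a u where au: "v = a # u" "length u = Suc t" by (auto simp: Lv_def length_Suc_conv)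
    then obtain m b where mb: "u = m @ [b]" by (cases u rule: rev_cases) auto
    have lm: "length m = t" using au mb by simp
    have ok: "a < d" "set m \<subseteq> {..<d - 1}" using v au mb by (auto simp: Lv_def okv_def)
    have "Suc b < d - 1" using v au mb by (auto simp: Lv_def fcv_def bnd_def butlast_append)
    then have "b < d - 2" by simp
    then show "v \<in> (\<lambda>(a, m, b). a # m @ [b]) `
     ({..<d} \<times> {m. set m \<subseteq> {..<d - 1} \<and> length m = t} \<times> {..<d - 2})"
      using au mb lm ok by (intro image_eqI[of _ _ "(a, m, b)"]) auto
  qed
next
  show "(\<lambda>(a, m, b). a # m @ [b]) `
     ({..<d} \<times> {m. set m \<subseteq> {..<d - 1} \<and> length m = t} \<times> {..<d - 2}) \<subseteq> Lv d (Suc (Suc t))"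
    by (auto simp: Lv_def okv_def fcv_def bnd_def butlast_append)
qed

lemma card_Lv2: "card (Lv d (Suc (Suc t))) = d * (d - 1) ^ t * (d - 2)"
proof -
  have inj: "inj_on (\<lambda>(a, m, b). a # m @ [b])
     ({..<d} \<times> {m. set m \<subseteq> {..<d - 1} \<and> length m = (t::nat)} \<times> {..<d - 2})"
    by (auto simp: inj_on_def)
  have "card {m. set m \<subseteq> {..<d - 1} \<and> length m = t} = (d - 1) ^ t"
    using card_lists_length_eq[of "{..<d - 1}" t] by simp
  then show ?thesis unfolding Lv2 card_image[OF inj]
    by (simp add: card_cartesian_product)
qed

lemma FS_step: "{v. free d (Suc (Suc h)) v} = {v. free d h v} \<union> Lv d (Suc (Suc h))"
  by (auto simp: free_alt Lv_def) (auto simp: le_Suc_eq)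

lemma FS_fin: "finite {v. free d h v}"
  by (rule finite_subset[OF _ finite_V[of d h]]) (auto simp: free_def)

lemma card_FS: assumes d: "d \<ge> 3" shows "card {v. free d h v} = (d - 1) ^ h"
proof (induction h rule: less_induct)
  case (less h)
  show ?case
  proof (cases h)
    case 0
    have "{v. free d 0 v} = Lv d 0" by (auto simp: free_alt Lv_def)
    then show ?thesis using 0 Lv0 by simp
  next
    case (Suc h1)
    show ?thesis
    proof (cases h1)
      case 0
      have "{v. free d 1 v} = Lv d 1" by (auto simp: free_alt Lv_def okv_def fcv_def le_Suc_eq)
      then show ?thesis using Suc 0 card_Lv1 by simp
    next
      case (Suc k)
      have hk: "h = Suc (Suc k)" using Suc \<open>h = Suc h1\<close> by simp
      have disj: "{v. free d k v} \<inter> Lv d (Suc (Suc k)) = {}"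
        by (auto simp: free_alt Lv_def)
      have "card {v. free d h v} = card {v. free d k v} + card (Lv d (Suc (Suc k)))"
        unfolding hk FS_step using disj FS_fin finite_Lv by (simp add: card_Un_disjoint)
      also have "\<dots> = (d - 1) ^ k + d * (d - 1) ^ k * (d - 2)"
        using less.IH[of k] hk card_Lv2 by simp
      also have "\<dots> = (d - 1) ^ h"
      proof -
        obtain n where n: "d = n + 3" using d by (metis add.commute le_add_diff_inverse)
        show ?thesis unfolding hk n by (simp add: algebra_simps power2_eq_square)
      qed
      finally show ?thesis .
    qed
  qed
qed




lemma quot_embed:
  fixes G (structure)
  assumes N: "N \<lhd> G" and Pg: "group PP"
    and f: "\<And>a. a \<in> carrier PP \<Longrightarrow> f a \<in> carrier G"
    and hom: "\<And>a b. a \<in> carrier PP \<Longrightarrow> b \<in> carrier PP \<Longrightarrow>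
        f (a \<otimes>\<^bsub>PP\<^esub> b) \<otimes>\<^bsub>G\<^esub> inv\<^bsub>G\<^esub> (f a \<otimes>\<^bsub>G\<^esub> f b) \<in> N"
    and inj: "\<And>a b. a \<in> carrier PP \<Longrightarrow> b \<in> carrier PP \<Longrightarrow>
        f a \<otimes>\<^bsub>G\<^esub> inv\<^bsub>G\<^esub> (f b) \<in> N \<Longrightarrow> a = b"
  shows "\<exists>H. subgroup H (G Mod N) \<and> (G Mod N)\<lparr>carrier := H\<rparr> \<cong> PP"
proof -
  interpret normal N G by fact
  have sg: "subgroup N G" by (rule subgroup_axioms)
  have ceq: "N #> x = N #> y \<longleftrightarrow> x \<otimes> inv y \<in> N" if "x \<in> carrier G" "y \<in> carrier G" for x y
  proof
    assume "N #> x = N #> y"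
    then have "x \<in> N #> y" using rcos_self[OF that(1) sg] by simp
    then show "x \<otimes> inv y \<in> N" using rcos_module_imp[OF is_group that(2)] by simp
  next
    assume "x \<otimes> inv y \<in> N"
    then have "x \<in> N #> y" using rcos_module_rev[OF is_group that(2) that(1)] by simp
    then show "N #> x = N #> y" using repr_independence[OF _ that(2) sg] by simp
  qed
  define \<Phi> where "\<Phi> = (\<lambda>a. N #> f a)"
  have GM: "group (G Mod N)" by (rule factorgroup_is_group)
  have car: "\<Phi> a \<in> carrier (G Mod N)" if "a \<in> carrier PP" for a
    using f[OF that] unfolding \<Phi>_def FactGroup_def RCOSETS_def by auto
  have mul: "\<Phi> (a \<otimes>\<^bsub>PP\<^esub> b) = \<Phi> a \<otimes>\<^bsub>G Mod N\<^esub> \<Phi> b" if "a \<in> carrier PP" "b \<in> carrier PP" for a b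
  proof -
    have "\<Phi> a \<otimes>\<^bsub>G Mod N\<^esub> \<Phi> b = N #> (f a \<otimes> f b)"
      unfolding \<Phi>_def FactGroup_def using rcos_sum f that by simp
    also have "\<dots> = \<Phi> (a \<otimes>\<^bsub>PP\<^esub> b)"
    proof -
      have p: "a \<otimes>\<^bsub>PP\<^esub> b \<in> carrier PP" using Pg that by (simp add: group.is_monoid monoid.m_closed)
      show ?thesis unfolding \<Phi>_def using ceq[of "f (a \<otimes>\<^bsub>PP\<^esub> b)" "f a \<otimes> f b"] hom[OF that] f[OF p] f[OF that(1)] f[OF that(2)]
        by simp
    qed
    finally show ?thesis by simp
  qed
  have hm: "\<Phi> \<in> hom PP (G Mod N)" unfolding hom_def using car mul by auto
  interpret gh: group_hom PP "G Mod N" \<Phi>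
    using hm Pg GM by (simp add: group_hom_def group_hom_axioms_def)
  define H where "H = \<Phi> ` carrier PP"
  have sH: "subgroup H (G Mod N)" unfolding H_def by (rule gh.img_is_subgroup)
  have injP: "inj_on \<Phi> (carrier PP)"
  proof
    fix a b assume ab: "a \<in> carrier PP" "b \<in> carrier PP" "\<Phi> a = \<Phi> b"
    then show "a = b" using inj[OF ab(1,2)] ceq f unfolding \<Phi>_def by blast
  qed
  have "\<Phi> \<in> iso PP ((G Mod N)\<lparr>carrier := H\<rparr>)"
    unfolding iso_def hom_def bij_betw_def using injP mul by (auto simp: H_def)
  then have "PP \<cong> (G Mod N)\<lparr>carrier := H\<rparr>" unfolding is_iso_def by auto
  then have "(G Mod N)\<lparr>carrier := H\<rparr> \<cong> PP" by (rule group.iso_sym[OF Pg])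
  then show ?thesis using sH by blast
qed




lemma small_dvd_eq:
  assumes "0 \<le> (a::int)" "a < int d" "0 \<le> b" "b < int d" "a - b = int d * t"
  shows "a = b"
proof -
  have "t = 0"
  proof (rule ccontr)
    assume "t \<noteq> 0"
    then consider "t \<ge> 1" | "t \<le> -1" by linarith
    then show False
    proof cases
      case 1
      have "int d * 1 \<le> int d * t" by (rule mult_left_mono) (use 1 in simp_all)
      then show False using assms by linarith
    next
      case 2
      have "int d * t \<le> int d * (-1)" by (rule mult_left_mono) (use 2 in simp_all)
      then show False using assms by linarith
    qed
  qed
  then show ?thesis using assms by simp
qed

lemma DS_add: "DS d h (\<lambda>u. f u + g u) x = DS d h f x + DS d h g x"
  unfolding DS_def by (simp add: sum.distrib distrib_right)

lemma DS_diff: "DS d h (\<lambda>u. f u - g u) x = DS d h f x - DS d h g x"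
  unfolding DS_def by (simp add: sum_subtractf left_diff_distrib)

lemma DS_smult: "DS d h (\<lambda>u. k * f u) x = k * DS d h f x"
  unfolding DS_def by (simp add: sum_distrib_left mult.assoc)

lemma DS_lin: "DS d h (\<lambda>u. \<Sum>i\<in>I. q i * g i u) x = (\<Sum>i\<in>I. q i * DS d h (g i) x)"
  unfolding DS_def by (simp add: sum_distrib_right sum_distrib_left mult.assoc) (rule sum.swap)

lemma ZV_carrier: "carrier (ZV d h) = (\<Pi>\<^sub>E i\<in>tree_vertices d h. UNIV)"
  by (simp add: ZV_def)

lemma ZV_mult: "x \<otimes>\<^bsub>ZV d h\<^esub> y = (\<lambda>i\<in>tree_vertices d h. x i + y i)"
  by (simp add: ZV_def)

lemma ZV_group: "group (ZV d h)"
  by (simp add: ZV_def)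

lemma ZV_inv: "x \<in> carrier (ZV d h) \<Longrightarrow> inv\<^bsub>ZV d h\<^esub> x = (\<lambda>i\<in>tree_vertices d h. - x i)"
  unfolding ZV_def by (subst inv_product_group) (auto simp: ZV_def)

lemma ZV_comm: "comm_group (ZV d h)"
  by (rule group.group_comm_groupI[OF ZV_group]) (auto simp: ZV_mult add.commute)

lemma Lambda_alt: "tree_Lambda d h = {f. \<exists>c. f = restrict (DS d h c) (tree_vertices d h)}"
  by (simp add: tree_Lambda_def DS_def[abs_def])

lemma Lambda_sub: "subgroup (tree_Lambda d h) (ZV d h)"
proof (rule group.subgroupI[OF ZV_group])
  show "tree_Lambda d h \<subseteq> carrier (ZV d h)" by (auto simp: Lambda_alt ZV_carrier)
  show "tree_Lambda d h \<noteq> {}" by (auto simp: Lambda_alt)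
next
  fix a assume "a \<in> tree_Lambda d h"
  then obtain c where c: "a = restrict (DS d h c) (tree_vertices d h)" by (auto simp: Lambda_alt)
  then have "a \<in> carrier (ZV d h)" by (simp add: ZV_carrier)
  then have "inv\<^bsub>ZV d h\<^esub> a = restrict (DS d h (\<lambda>u. - c u)) (tree_vertices d h)"
    using c by (auto simp: ZV_inv DS_neg intro!: restrict_ext)
  then show "inv\<^bsub>ZV d h\<^esub> a \<in> tree_Lambda d h" by (auto simp: Lambda_alt)
next
  fix a b assume "a \<in> tree_Lambda d h" "b \<in> tree_Lambda d h"
  then obtain c1 c2 where c: "a = restrict (DS d h c1) (tree_vertices d h)"
    "b = restrict (DS d h c2) (tree_vertices d h)" by (auto simp: Lambda_alt)
  then have "a \<otimes>\<^bsub>ZV d h\<^esub> b = restrict (DS d h (\<lambda>u. c1 u + c2 u)) (tree_vertices d h)"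
    by (auto simp: ZV_mult DS_add intro!: restrict_ext)
  then show "a \<otimes>\<^bsub>ZV d h\<^esub> b \<in> tree_Lambda d h" by (auto simp: Lambda_alt)
qed

lemma Lambda_normal: "tree_Lambda d h \<lhd> ZV d h"
  by (rule comm_group.subgroup_imp_normal[OF ZV_comm Lambda_sub])

lemma ZV_diff: "x \<in> carrier (ZV d h) \<Longrightarrow> y \<in> carrier (ZV d h) \<Longrightarrow>
   x \<otimes>\<^bsub>ZV d h\<^esub> inv\<^bsub>ZV d h\<^esub> y = (\<lambda>i\<in>tree_vertices d h. x i - y i)"
  by (auto simp: ZV_inv ZV_mult intro!: restrict_ext)




theorem lemma6p6:
  fixes d h :: nat
  assumes "d \<ge> 3" and "h \<ge> 1"
  shows "\<exists>H. subgroup H (Gdh d h) \<and>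
    (Gdh d h)\<lparr>carrier := H\<rparr> \<cong>
      product_group {..<(d - 1) ^ h} (\<lambda>_. integer_mod_group d)"
proof -
  let ?V = "tree_vertices d h"
  define N where "N = (d - 1) ^ h"
  have d3: "d \<ge> 3" using assms by simp
  have d2: "d \<ge> 2" using d3 by simp
  have "card {v. free d h v} = card {..<N}" using card_FS[OF d3] by (simp add: N_def)
  then obtain \<beta> where \<beta>: "bij_betw \<beta> {..<N} {v. free d h v}"
    using finite_same_card_bij[OF finite_lessThan FS_fin] by metis
  have \<beta>free: "free d h (\<beta> i)" if "i < N" for i
    using \<beta> that by (auto simp: bij_betw_def)
  have \<beta>inj: "\<beta> i = \<beta> k \<longleftrightarrow> i = k" if "i < N" "k < N" for i k
    using \<beta> that by (auto simp: bij_betw_def inj_on_def)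
  have \<beta>V: "\<beta> i \<in> ?V" if "i < N" for i
    using \<beta>free[OF that] by (simp add: free_def)
  define Zs where "Zs a = (\<lambda>u. \<Sum>i<N. a i * zv d (\<beta> i) u)" for a :: "nat \<Rightarrow> int"
  have K1: "DS d h (Zs a) x = int d * Zs a x" if x: "x \<in> ?V" for a x
  proof -
    have "DS d h (Zs a) x = (\<Sum>i<N. a i * DS d h (zv d (\<beta> i)) x)"
      unfolding Zs_def by (rule DS_lin)
    also have "\<dots> = (\<Sum>i<N. a i * (int d * zv d (\<beta> i) x))"
      using DS_z[OF d3 \<beta>free x] by simp
    also have "\<dots> = int d * Zs a x"
      unfolding Zs_def by (simp add: sum_distrib_left algebra_simps)
    finally show ?thesis .
  qed
  have K2: "Zs a (\<beta> k) = a k" if k: "k < N" for a k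
  proof -
    have "Zs a (\<beta> k) = (\<Sum>i<N. if i = k then a i else 0)"
      unfolding Zs_def
    proof (intro sum.cong refl)
      fix i assume "i \<in> {..<N}"
      then show "a i * zv d (\<beta> i) (\<beta> k) = (if i = k then a i else 0)"
        using z_priv[OF d3 \<beta>free[OF k] \<beta>free[of i]] \<beta>inj[of k i] k by auto
    qed
    also have "\<dots> = a k" using k by (simp add: sum.delta)
    finally show ?thesis .
  qed
  define P where "P = product_group {..<N} (\<lambda>_. integer_mod_group d)"
  have Pg: "group P" unfolding P_def by simp
  have Pcar: "carrier P = (\<Pi>\<^sub>E i\<in>{..<N}. {0..<int d})"
    unfolding P_def using d3 by (simp add: carrier_integer_mod_group)
  have Pmul: "a \<otimes>\<^bsub>P\<^esub> b = (\<lambda>i\<in>{..<N}. (a i + b i) mod int d)" for a b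
    unfolding P_def by simp
  define f where "f a = restrict (Zs a) ?V" for a
  have fcar: "f a \<in> carrier (ZV d h)" for a by (simp add: f_def ZV_carrier)
  have hom: "f (a \<otimes>\<^bsub>P\<^esub> b) \<otimes>\<^bsub>ZV d h\<^esub> inv\<^bsub>ZV d h\<^esub> (f a \<otimes>\<^bsub>ZV d h\<^esub> f b) \<in> tree_Lambda d h"
    if ab: "a \<in> carrier P" "b \<in> carrier P" for a b
  proof -
    define q where "q i = - ((a i + b i) div int d)" for i
    have ab_eq: "(a \<otimes>\<^bsub>P\<^esub> b) i = a i + b i + int d * q i" if "i < N" for i
      using that minus_div_mult_eq_mod[of "a i + b i" "int d"] unfolding Pmul q_def
      by (simp add: algebra_simps)
    have Zeq: "Zs (a \<otimes>\<^bsub>P\<^esub> b) x = Zs a x + Zs b x + int d * Zs q x" for x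
      unfolding Zs_def using ab_eq
      by (simp add: sum.distrib sum_distrib_left algebra_simps)
    have fab: "f a \<otimes>\<^bsub>ZV d h\<^esub> f b \<in> carrier (ZV d h)" by (simp add: ZV_mult ZV_carrier)
    have "f (a \<otimes>\<^bsub>P\<^esub> b) \<otimes>\<^bsub>ZV d h\<^esub> inv\<^bsub>ZV d h\<^esub> (f a \<otimes>\<^bsub>ZV d h\<^esub> f b) =
        restrict (DS d h (Zs q)) ?V"
      unfolding ZV_diff[OF fcar fab]
      by (auto simp: f_def ZV_mult Zeq K1 intro!: restrict_ext)
    then show ?thesis by (auto simp: Lambda_alt)
  qed
  have inj: "a = b"
    if ab: "a \<in> carrier P" "b \<in> carrier P"
      and mem: "f a \<otimes>\<^bsub>ZV d h\<^esub> inv\<^bsub>ZV d h\<^esub> (f b) \<in> tree_Lambda d h" for a b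
  proof -
    obtain c where c: "f a \<otimes>\<^bsub>ZV d h\<^esub> inv\<^bsub>ZV d h\<^esub> (f b) = restrict (DS d h c) ?V"
      using mem by (auto simp: Lambda_alt)
    have cx: "Zs a x - Zs b x = DS d h c x" if "x \<in> ?V" for x
      using fun_cong[OF c, of x] that unfolding ZV_diff[OF fcar fcar] by (simp add: f_def)
    define w where "w u = Zs a u - Zs b u - int d * c u" for u
    have "DS d h w x = 0" if x: "x \<in> ?V" for x
    proof -
      have "DS d h w x = DS d h (Zs a) x - DS d h (Zs b) x - int d * DS d h c x"
        unfolding w_def by (simp add: DS_diff DS_smult)
      then show ?thesis using K1[OF x, of a] K1[OF x, of b] cx[OF x] by (simp add: algebra_simps)
    qed
    then have w0: "\<forall>x\<in>?V. w x = 0" using DS_inj[OF d2] by blast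
    show "a = b"
    proof (rule PiE_ext[of a "{..<N}" "\<lambda>_. {0..<int d}" b])
      show "a \<in> (\<Pi>\<^sub>E i\<in>{..<N}. {0..<int d})" "b \<in> (\<Pi>\<^sub>E i\<in>{..<N}. {0..<int d})"
        using ab Pcar by auto
    next
      fix k assume k: "k \<in> {..<N}"
      then have "w (\<beta> k) = 0" using w0 \<beta>V by simp
      then have "a k - b k = int d * c (\<beta> k)" using K2 k unfolding w_def by simp
      moreover have "a k \<in> {0..<int d}" "b k \<in> {0..<int d}" using ab Pcar k by (auto simp: PiE_iff)
      ultimately show "a k = b k" using small_dvd_eq by auto
    qed
  qed
  have "\<exists>H. subgroup H (ZV d h Mod tree_Lambda d h) \<and> (ZV d h Mod tree_Lambda d h)\<lparr>carrier := H\<rparr> \<cong> P"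
    by (rule quot_embed[OF Lambda_normal Pg fcar hom inj])
  then show ?thesis unfolding Gdh_def P_def N_def .
qed


end
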